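(* For every positive integer $n$, the Wiener indices of the spiro ortho-chain $O_n$, the spiro meta-chain $M_n$ and the spiro para-chain $P_n$ are $$W(O_n)=\frac{25}{6}n^3+\frac{65}{2}n^2-\frac{29}{3}n,\quad W(M_n)=\frac{25}{3}n^3+20n^2-\frac{4}{3}n,\quad W(P_n)=\frac{25}{2}n^3+\frac{15}{2}n^2+7n.$$
   Context: The Wiener index is $W(G)=\sum_{\{u,v\}\subseteq V(G)}d_G(u,v)$, $d_G$ the shortest-path distance. A spiro hexagonal chain of length $n$, $G_n=H_0H_1\cdots H_{n-1}$, is a connected graph in which every block is a hexagon (6-cycle) $H_0,\dots,H_{n-1}$, each hexagon has at most two cut-vertices, each cut-vertex is shared by exactly two hexagons, and for $k=1,\dots,n-1$ the hexagons $H_{k-1}$ and $H_k$ share the cut-vertex $c_k$. For $k\ge1$, a vertex of $H_k$ at distance $1$, $2$, $3$ from $c_k$ is called an ortho-, meta-, para-vertex of $H_k$, denoted $o_k,m_k,p_k$. The spiro ortho-chain $O_n$ is the spiro hexagonal chain with $c_k=o_{k-1}$ for all $2\le k\le n-1$; the spiro meta-chain $M_n$ has $c_k=m_{k-1}$ and the spiro para-chain $P_n$ has $c_k=p_{k-1}$ for all $2\le k\le n-1$ (for $n\le2$ these conditions are vacuous). *)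

theory Defs
  imports Complex_Main "HOL-Library.Product_Lexorder"
begin

definition is_walk :: "('a \<Rightarrow> 'a \<Rightarrow> bool) \<Rightarrow> 'a list \<Rightarrow> bool" where
  "is_walk E xs \<longleftrightarrow> xs \<noteq> [] \<and> (\<forall>i. Suc i < length xs \<longrightarrow> E (xs ! i) (xs ! Suc i))"

definition gdist :: "('a \<Rightarrow> 'a \<Rightarrow> bool) \<Rightarrow> 'a \<Rightarrow> 'a \<Rightarrow> nat" where
  "gdist E u v = (LEAST n. \<exists>xs. is_walk E xs \<and> hd xs = u \<and> last xs = v \<and> length xs = Suc n)"

definition wiener :: "'a::linorder set \<Rightarrow> ('a \<Rightarrow> 'a \<Rightarrow> bool) \<Rightarrow> nat" where
  "wiener V E = (\<Sum>S \<in> {S. S \<subseteq> V \<and> card S = 2}. gdist E (Min S) (Max S))"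

text \<open>Hexagon H_k has positions j = 0..5 around the cycle. For k \<ge> 1, position 0
 of H_k is the cut-vertex c_k, which is identified with position t of H_(k-1).
 Since position 0 of H_(k-1) is c_(k-1) (for k \<ge> 2), c_k is at distance
 t from c_(k-1) in H_(k-1): t = 1 gives ortho, t = 2 meta, t = 3 para.
 (For k = 1 any vertex of H_0 may serve, by symmetry of the hexagon.)\<close>

definition spiro_pos :: "nat \<Rightarrow> nat \<Rightarrow> nat \<Rightarrow> nat \<times> nat" where
  "spiro_pos t k j = (if 1 \<le> k \<and> j = 0 then (k - 1, t) else (k, j))"

definition spiro_V :: "nat \<Rightarrow> nat \<Rightarrow> (nat \<times> nat) set" where
  "spiro_V t n = {spiro_pos t k j | k j. k < n \<and> j < 6}"

definition spiro_E :: "nat \<Rightarrow> nat \<Rightarrow> nat \<times> nat \<Rightarrow> nat \<times> nat \<Rightarrow> bool" where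
  "spiro_E t n u v \<longleftrightarrow> (\<exists>k j. k < n \<and> j < 6 \<and>
     ((u = spiro_pos t k j \<and> v = spiro_pos t k ((j + 1) mod 6)) \<or>
      (v = spiro_pos t k j \<and> u = spiro_pos t k ((j + 1) mod 6))))"

abbreviation ortho_V where "ortho_V n \<equiv> spiro_V 1 n"
abbreviation ortho_E where "ortho_E n \<equiv> spiro_E 1 n"
abbreviation meta_V where "meta_V n \<equiv> spiro_V 2 n"
abbreviation meta_E where "meta_E n \<equiv> spiro_E 2 n"
abbreviation para_V where "para_V n \<equiv> spiro_V 3 n"
abbreviation para_E where "para_E n \<equiv> spiro_E 3 n"

end

theory Submission
  imports Defs
begin
definition hx :: "nat \<Rightarrow> nat \<Rightarrow> nat" where
 "hx a b = (let d = (if a \<le> b then b - a else a - b) in min d (6 - d))"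
definition fd :: "nat \<Rightarrow> nat\<times>nat \<Rightarrow> nat\<times>nat \<Rightarrow> nat" where
 "fd t u v = (if fst u = fst v then hx (snd u) (snd v)
    else if fst u < fst v then hx (snd u) t + (fst v - fst u - 1)*t + hx 0 (snd v)
    else hx (snd v) t + (fst u - fst v - 1)*t + hx 0 (snd u))"
definition nxt :: "nat \<Rightarrow> nat \<Rightarrow> nat" where
 "nxt a c = (if hx ((a+1) mod 6) c < hx a c then (a+1) mod 6 else (a+5) mod 6)"
definition cn :: "nat \<Rightarrow> nat\<times>nat \<Rightarrow> bool" where
 "cn n u \<longleftrightarrow> u = (0,0) \<or> (fst u < n \<and> 1 \<le> snd u \<and> snd u \<le> 5)"

lemma six: "(j::nat) < 6 \<Longrightarrow> j=0 \<or> j=1 \<or> j=2 \<or> j=3 \<or> j=4 \<or> j=5" by auto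
lemma hx_sym: "hx a b = hx b a" unfolding hx_def Let_def by auto
lemma hx_same[simp]: "hx a a = 0" unfolding hx_def by simp
lemma hx0t: "t \<in> {1,2,3} \<Longrightarrow> hx 0 t = t \<and> hx t 0 = t" unfolding hx_def Let_def by auto

lemma hx_adj:
  assumes "p < 6" "c < 6"
  shows "hx p c \<le> hx ((p+1) mod 6) c + 1 \<and> hx ((p+1) mod 6) c \<le> hx p c + 1"
  using six[OF assms(1)] six[OF assms(2)]
  by (elim disjE) (simp_all add: hx_def)

lemma nxt_ok:
  assumes "a < 6" "c < 6" "a \<noteq> c"
  shows "hx (nxt a c) c + 1 = hx a c \<and> (nxt a c = (a+1) mod 6 \<or> nxt a c = (a+5) mod 6)"
  using six[OF assms(1)] six[OF assms(2)] assms(3)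
  by (elim disjE) (simp_all add: hx_def nxt_def)

lemma posd:
  assumes t: "t \<in> {1,2,3}" and p: "p < 6"
  shows "fd t (spiro_pos t k p) (m,b) = (if m=k then hx p b else if k<m then hx p t + (m-k-1)*t + hx 0 b
        else hx p 0 + (k-m-1)*t + hx b t)"
proof (cases "p = 0 \<and> 1 \<le> k")
  case True
  then have e: "spiro_pos t k p = (k-1,t)" by (simp add: spiro_pos_def)
  have "m = k \<or> m = k - 1 \<or> (\<exists>d. k = m + 2 + d) \<or> (\<exists>d. m = k + 1 + d)" using True by arith
  then show ?thesis using True hx0t[OF t] unfolding e fd_def
    by (elim disjE exE) (auto simp: hx_sym algebra_simps)
next
  case False
  then have e: "spiro_pos t k p = (k,p)" by (auto simp: spiro_pos_def)
  show ?thesis unfolding e fd_def by (auto simp: hx_sym)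
qed

lemma fd_refl[simp]: "fd t u u = 0" by (simp add: fd_def)
lemma fd_sym: "fd t u v = fd t v u" by (auto simp: fd_def hx_sym)

lemma E_sym: "spiro_E t n u v = spiro_E t n v u" unfolding spiro_E_def by blast

lemma cn_pos:
  assumes t: "t \<in> {1,2,3}" and "k < n" "p < 6"
  shows "cn n (spiro_pos t k p)"
  using assms by (auto simp: cn_def spiro_pos_def)

lemma cn_split:
  assumes "cn n u" "1 \<le> n"
  shows "fst u < n \<and> snd u < 6 \<and> u = spiro_pos t (fst u) (snd u) \<and> (0 < fst u \<longrightarrow> 1 \<le> snd u)"
  using assms by (auto simp: cn_def spiro_pos_def)

lemma cn_props:
  assumes "cn n u" "1 \<le> n"
  shows "fst u < n \<and> snd u < 6 \<and> (0 < fst u \<longrightarrow> 1 \<le> snd u)"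
  using assms by (auto simp: cn_def)

lemma edge_nxt:
  assumes "k < n" "a < 6" "c < 6" "a \<noteq> c"
  shows "spiro_E t n (spiro_pos t k a) (spiro_pos t k (nxt a c))"
proof -
  from nxt_ok[OF assms(2-4)] have "nxt a c = (a+1) mod 6 \<or> nxt a c = (a+5) mod 6" by simp
  then show ?thesis
  proof
    assume h: "nxt a c = (a+1) mod 6"
    show ?thesis unfolding spiro_E_def h using assms(1,2)
      by (intro exI[of _ k] exI[of _ a]) auto
  next
    assume h: "nxt a c = (a+5) mod 6"
    have "((a+5) mod 6 + 1) mod 6 = a" using six[OF assms(2)] by auto
    then show ?thesis unfolding spiro_E_def h using assms(1)
      by (intro exI[of _ k] exI[of _ "(a+5) mod 6"]) auto
  qed
qed

lemma lip:
  assumes t: "t \<in> {1,2,3}" and E: "spiro_E t n u w" and v: "snd v < 6"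
  shows "fd t u v \<le> fd t w v + 1"
proof -
  obtain m b where vv: "v = (m,b)" by (cases v)
  have b: "b < 6" using v vv by simp
  from E obtain k j where kj: "k < n" "j < 6" and
    c: "(u = spiro_pos t k j \<and> w = spiro_pos t k ((j + 1) mod 6)) \<or>
        (w = spiro_pos t k j \<and> u = spiro_pos t k ((j + 1) mod 6))"
    unfolding spiro_E_def by blast
  have t6: "t < 6" using t by auto
  have j6: "Suc j mod 6 < 6" by simp
  note A = hx_adj[OF kj(2) b] hx_adj[OF kj(2) t6] hx_adj[OF kj(2), of 0]
  from c show ?thesis
  proof
    assume h: "u = spiro_pos t k j \<and> w = spiro_pos t k ((j + 1) mod 6)"
    then show ?thesis using A by (simp add: vv posd[OF t kj(2)] posd[OF t j6])
  next
    assume h: "w = spiro_pos t k j \<and> u = spiro_pos t k ((j + 1) mod 6)"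
    then show ?thesis using A by (simp add: vv posd[OF t kj(2)] posd[OF t j6])
  qed
qed

lemma is_walk_single: "is_walk E [x]" by (simp add: is_walk_def)
lemma is_walk_Cons2: "is_walk E (x # y # ys) \<longleftrightarrow> E x y \<and> is_walk E (y # ys)"
  unfolding is_walk_def
  apply safe
    apply force
   apply (metis Suc_less_eq length_Cons nth_Cons_Suc)
  by (metis Suc_less_eq length_Cons less_Suc_eq_0_disj nth_Cons_0 nth_Cons_Suc)

lemma is_walk_Cons: "xs \<noteq> [] \<Longrightarrow> E x (hd xs) \<Longrightarrow> is_walk E xs \<Longrightarrow> is_walk E (x # xs)"
  by (cases xs) (auto simp: is_walk_Cons2)

lemma is_walk_snoc: "is_walk E xs \<Longrightarrow> E (last xs) y \<Longrightarrow> is_walk E (xs @ [y])"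
proof (induction xs rule: induct_list012)
  case 1 then show ?case by (simp add: is_walk_def)
next
  case (2 x) then show ?case by (simp add: is_walk_Cons2 is_walk_single)
next
  case (3 x y zs) then show ?case by (simp add: is_walk_Cons2)
qed

lemma lb:
  assumes t: "t \<in> {1,2,3}"
  shows "is_walk (spiro_E t n) xs \<Longrightarrow> snd (last xs) < 6 \<Longrightarrow> fd t (hd xs) (last xs) \<le> length xs - 1"
proof (induction xs rule: induct_list012)
  case 1 then show ?case by (simp add: is_walk_def)
next
  case (2 x) then show ?case by simp
next
  case (3 x y zs)
  then have E: "spiro_E t n x y" and W: "is_walk (spiro_E t n) (y # zs)" by (auto simp: is_walk_Cons2)
  have "fd t y (last (y#zs)) \<le> length (y#zs) - 1" using 3 W by simp
  moreover have "fd t x (last (y#zs)) \<le> fd t y (last (y#zs)) + 1"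
    using lip[OF t E] "3.prems"(2) by simp
  ultimately show ?case by simp
qed

lemma fd_zero:
  assumes "cn n u" "cn n v" "fd t u v = 0"
  shows "u = v"
proof -
  obtain k a m b where uu: "u = (k,a)" and vv: "v = (m,b)" by (cases u, cases v)
  have hz: "\<And>x y. x < 6 \<Longrightarrow> y < 6 \<Longrightarrow> hx x y = 0 \<Longrightarrow> x = y"
    unfolding hx_def Let_def by (auto split: if_splits)
  show ?thesis using assms hz[of a b] hz[of 0 b] hz[of 0 a]
    unfolding uu vv cn_def fd_def by (auto split: if_splits)
qed

lemma step:
  assumes t: "t \<in> {1,2,3}" and n: "1 \<le> n" and u: "cn n u" and v: "cn n v"
    and le: "fst u \<le> fst v" and ne: "u \<noteq> v"
  shows "\<exists>w. cn n w \<and> spiro_E t n u w \<and> fd t w v + 1 = fd t u v"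
proof -
  define k a m b where "k = fst u" "a = snd u" "m = fst v" "b = snd v"
  note U = cn_split[OF u n, of t, folded k_a_m_b_def]
  note V = cn_props[OF v n, folded k_a_m_b_def]
  have uu: "u = spiro_pos t k a" using U by simp
  have vv: "v = (m,b)" using k_a_m_b_def by simp
  have t6: "t < 6" using t by auto
  have km: "k \<le> m" using le k_a_m_b_def by simp
  consider "k = m" | "k < m" "a \<noteq> t" | "k < m" "a = t" using km by linarith
  then show ?thesis
  proof cases
    case 1
    have ab: "a \<noteq> b" using ne 1 k_a_m_b_def by (auto simp: prod_eq_iff)
    define p where "p = nxt a b"
    have p6: "p < 6" using nxt_ok[OF _ _ ab] U V p_def by auto
    show ?thesis
      apply (rule exI[of _ "spiro_pos t k p"])
      using cn_pos[OF t U[THEN conjunct1] p6] edge_nxt[OF U[THEN conjunct1] _ _ ab, of t] U V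
        nxt_ok[OF _ _ ab] 1 unfolding uu vv p_def
      by (simp add: posd[OF t] p6[unfolded p_def])
  next
    case 2
    define p where "p = nxt a t"
    have p6: "p < 6" using nxt_ok[OF _ t6 2(2)] U p_def by auto
    show ?thesis
      apply (rule exI[of _ "spiro_pos t k p"])
      using cn_pos[OF t U[THEN conjunct1] p6] edge_nxt[OF U[THEN conjunct1] _ t6 2(2), of t] U
        nxt_ok[OF _ t6 2(2)] 2 unfolding uu vv p_def
      by (simp add: posd[OF t] p6[unfolded p_def])
  next
    case 3
    have u2: "u = spiro_pos t (k+1) 0" using uu 3 t by (auto simp: spiro_pos_def)
    have k1: "k + 1 < n" using 3 V by linarith
    show ?thesis
    proof (cases "k + 1 = m")
      case True
      have b0: "0 \<noteq> b" using V 3 True by auto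
      define p where "p = nxt 0 b"
      have p6: "p < 6" using nxt_ok[OF _ _ b0] V p_def by auto
      show ?thesis
        apply (rule exI[of _ "spiro_pos t (k+1) p"])
        using cn_pos[OF t k1 p6] edge_nxt[OF k1 _ _ b0, of t] V nxt_ok[OF _ _ b0] True
        unfolding u2 vv p_def
        by (simp add: posd[OF t] p6[unfolded p_def])
    next
      case False
      have t0: "0 \<noteq> t" using t by auto
      define p where "p = nxt 0 t"
      have p6: "p < 6" using nxt_ok[OF _ t6 t0] p_def by auto
      obtain d where md: "m = k + 2 + d" proof
        show "m = k + 2 + (m - k - 2)" using False 3 by arith
      qed
      show ?thesis
        apply (rule exI[of _ "spiro_pos t (k+1) p"])
        using cn_pos[OF t k1 p6] edge_nxt[OF k1 _ t6 t0, of t] nxt_ok[OF _ t6 t0] False 3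
        unfolding u2 vv p_def
        by (simp add: posd[OF t] p6[unfolded p_def] md algebra_simps)
    qed
  qed
qed

lemma ex_walk:
  assumes t: "t \<in> {1,2,3}" and n: "1 \<le> n"
  shows "\<forall>u v. cn n u \<and> cn n v \<and> fd t u v = d \<longrightarrow>
     (\<exists>xs. is_walk (spiro_E t n) xs \<and> hd xs = u \<and> last xs = v \<and> length xs = Suc d)"
proof (induction d)
  case 0
  show ?case
  proof (intro allI impI)
    fix u v assume "cn n u \<and> cn n v \<and> fd t u v = 0"
    then have "u = v" using fd_zero by blast
    then show "\<exists>xs. is_walk (spiro_E t n) xs \<and> hd xs = u \<and> last xs = v \<and> length xs = Suc 0"
      by (intro exI[of _ "[u]"]) (simp add: is_walk_single)
  qed
next
  case (Suc d)
  show ?case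
  proof (intro allI impI)
    fix u v assume h: "cn n u \<and> cn n v \<and> fd t u v = Suc d"
    then have ne: "u \<noteq> v" by auto
    show "\<exists>xs. is_walk (spiro_E t n) xs \<and> hd xs = u \<and> last xs = v \<and> length xs = Suc (Suc d)"
    proof (cases "fst u \<le> fst v")
      case True
      obtain w where w: "cn n w" "spiro_E t n u w" "fd t w v + 1 = fd t u v"
        using step[OF t n _ _ True ne] h by blast
      obtain xs where xs: "is_walk (spiro_E t n) xs" "hd xs = w" "last xs = v" "length xs = Suc d"
        using Suc.IH w h by fastforce
      have "xs \<noteq> []" using xs by auto
      then show ?thesis using xs w
        by (intro exI[of _ "u # xs"]) (auto intro: is_walk_Cons)
    next
      case False
      then have le: "fst v \<le> fst u" by simp
      obtain w where w: "cn n w" "spiro_E t n v w" "fd t w u + 1 = fd t v u"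
        using step[OF t n _ _ le] ne h by metis
      have "fd t u w = d" using w h fd_sym[of t u v] fd_sym[of t u w] by simp
      then obtain xs where xs: "is_walk (spiro_E t n) xs" "hd xs = u" "last xs = w" "length xs = Suc d"
        using Suc.IH w h by fastforce
      have "spiro_E t n (last xs) v" using w xs E_sym by metis
      moreover have "xs \<noteq> []" using xs by auto
      ultimately show ?thesis using xs
        by (intro exI[of _ "xs @ [v]"]) (auto intro: is_walk_snoc)
    qed
  qed
qed

lemma gdist_fd:
  assumes t: "t \<in> {1,2,3}" and n: "1 \<le> n" and u: "cn n u" and v: "cn n v"
  shows "gdist (spiro_E t n) u v = fd t u v"
  unfolding gdist_def
proof (rule Least_equality)
  show "\<exists>xs. is_walk (spiro_E t n) xs \<and> hd xs = u \<and> last xs = v \<and> length xs = Suc (fd t u v)"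
    using ex_walk[OF t n] u v by blast
next
  fix y assume "\<exists>xs. is_walk (spiro_E t n) xs \<and> hd xs = u \<and> last xs = v \<and> length xs = Suc y"
  then obtain xs where xs: "is_walk (spiro_E t n) xs" "hd xs = u" "last xs = v" "length xs = Suc y" by blast
  have "snd v < 6" using v by (auto simp: cn_def)
  then show "fd t u v \<le> y" using lb[OF t xs(1)] xs by simp
qed

lemma V_eq:
  assumes t: "t \<in> {1,2,3}" and n: "1 \<le> n"
  shows "spiro_V t n = insert (0,0) ({..<n} \<times> {1..5::nat})"
proof
  show "spiro_V t n \<subseteq> insert (0,0) ({..<n} \<times> {1..5::nat})"
  proof
    fix x assume "x \<in> spiro_V t n"
    then obtain k j where kj: "x = spiro_pos t k j" "k < n" "j < 6" unfolding spiro_V_def by blast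
    show "x \<in> insert (0,0) ({..<n} \<times> {1..5::nat})"
      using kj t by (cases "1 \<le> k \<and> j = 0") (auto simp: spiro_pos_def)
  qed
next
  show "insert (0,0) ({..<n} \<times> {1..5::nat}) \<subseteq> spiro_V t n"
  proof
    fix x assume x: "x \<in> insert (0,0) ({..<n} \<times> {1..5::nat})"
    show "x \<in> spiro_V t n"
    proof (cases "x = (0,0)")
      case True
      have "x = spiro_pos t 0 0" using True by (simp add: spiro_pos_def)
      then show ?thesis using n unfolding spiro_V_def by force
    next
      case False
      then have "x = spiro_pos t (fst x) (snd x)" "fst x < n" "snd x < 6" using x by (auto simp: spiro_pos_def)
      then show ?thesis unfolding spiro_V_def by blast
    qed
  qed
qed

lemma cn_V: "t \<in> {1,2,3} \<Longrightarrow> 1 \<le> n \<Longrightarrow> u \<in> spiro_V t n \<Longrightarrow> cn n u"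
  by (auto simp: V_eq cn_def)

lemma pair_sum:
  fixes g :: "'a::linorder \<Rightarrow> 'a \<Rightarrow> nat"
  assumes "finite V" and sym: "\<And>u v. g u v = g v u" and refl: "\<And>u. g u u = 0"
  shows "2 * (\<Sum>S\<in>{S. S \<subseteq> V \<and> card S = 2}. g (Min S) (Max S)) = (\<Sum>u\<in>V. \<Sum>v\<in>V. g u v)"
  using assms(1)
proof (induction V rule: finite_induct)
  case empty
  have "{S. S \<subseteq> ({}::'a set) \<and> card S = 2} = {}" by auto
  then show ?case by simp
next
  case (insert x F)
  have seteq: "{S. S \<subseteq> insert x F \<and> card S = 2} = {S. S \<subseteq> F \<and> card S = 2} \<union> (\<lambda>v. {x,v}) ` F"
  proof (intro equalityI subsetI)
    fix S assume "S \<in> {S. S \<subseteq> insert x F \<and> card S = 2}"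
    then obtain a b where S: "S = {a,b}" "a \<noteq> b" "a \<in> insert x F" "b \<in> insert x F"
      by (auto simp: card_2_iff)
    show "S \<in> {S. S \<subseteq> F \<and> card S = 2} \<union> (\<lambda>v. {x,v}) ` F"
      using S insert.hyps by (cases "a = x"; cases "b = x") (auto simp: card_2_iff insert_commute)
  next
    fix S assume "S \<in> {S. S \<subseteq> F \<and> card S = 2} \<union> (\<lambda>v. {x,v}) ` F"
    then show "S \<in> {S. S \<subseteq> insert x F \<and> card S = 2}" using insert.hyps by (auto simp: card_insert_if)
  qed
  have disj: "{S. S \<subseteq> F \<and> card S = 2} \<inter> (\<lambda>v. {x,v}) ` F = {}" using insert.hyps by auto
  have inj: "inj_on (\<lambda>v. {x,v}) F" using insert.hyps by (auto simp: inj_on_def doubleton_eq_iff)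
  have fin1: "finite {S. S \<subseteq> F \<and> card S = 2}" using insert.hyps by auto
  have mm: "\<And>v. g (Min {x,v}) (Max {x,v}) = g x v"
  proof -
    fix v show "g (Min {x,v}) (Max {x,v}) = g x v"
      by (cases "x \<le> v") (auto simp: sym min_def max_def)
  qed
  have L: "(\<Sum>S\<in>{S. S \<subseteq> insert x F \<and> card S = 2}. g (Min S) (Max S)) =
        (\<Sum>S\<in>{S. S \<subseteq> F \<and> card S = 2}. g (Min S) (Max S)) + (\<Sum>v\<in>F. g x v)"
    unfolding seteq
    apply (subst sum.union_disjoint[OF fin1 finite_imageI[OF insert.hyps(1)] disj])
    apply (subst sum.reindex[OF inj])
    using mm by simp
  have R: "(\<Sum>u\<in>insert x F. \<Sum>v\<in>insert x F. g u v) = (\<Sum>u\<in>F. \<Sum>v\<in>F. g u v) + 2 * (\<Sum>v\<in>F. g x v)"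
    using insert.hyps by (simp add: sum.distrib refl sym[of _ x])
  show ?case using L R insert.IH by simp
qed

definition blk :: "nat \<Rightarrow> nat \<Rightarrow> nat \<Rightarrow> nat" where
  "blk t k m = (\<Sum>a\<in>{1..5::nat}. \<Sum>b\<in>{1..5::nat}. fd t (k,a) (m,b))"

lemma five: "{1..5::nat} = {1,2,3,4,5}" by auto

lemma blk_lt:
  assumes t: "t \<in> {1,2,3}" and km: "k < m"
  shows "real (blk t k m) = 90 - 5 * real t + 25 * (real m - real k - 1) * real t"
proof -
  define d where "d = m - k - 1"
  have e: "\<And>a b. fd t (k,a) (m,b) = hx a t + hx 0 b + d * t" using km by (simp add: fd_def d_def)
  have r: "real d = real m - real k - 1" using km d_def by simp
  have "blk t k m = (\<Sum>a\<in>{1..5::nat}. \<Sum>b\<in>{1..5::nat}. hx a t + hx 0 b + d * t)"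
    unfolding blk_def e ..
  also have "\<dots> = 90 - 5 * t + 25 * d * t" using t
    unfolding five by (auto simp: hx_def)
  finally show ?thesis using t r by auto
qed

lemma blk_eq: "blk t k k = 36"
  unfolding blk_def five by (simp add: fd_def hx_def)

lemma blk_sym: "blk t k m = blk t m k"
  unfolding blk_def by (subst sum.swap) (simp add: fd_sym)

lemma gauss_r: "(\<Sum>k<n. real k) = real n * (real n - 1) / 2"
  by (induction n) (auto simp: field_simps)

lemma blk_col:
  assumes t: "t \<in> {1,2,3}"
  shows "(\<Sum>k<n. real (blk t k n)) = real n * (90 - 5 * real t) + 25 * real t * real n * (real n - 1) / 2"
proof -
  have "(\<Sum>k<n. real (blk t k n)) = (\<Sum>k<n. (90 - 5 * real t + 25 * (real n - 1) * real t) - 25 * real t * real k)"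
    by (rule sum.cong) (auto simp: blk_lt[OF t] algebra_simps)
  also have "\<dots> = real n * (90 - 5 * real t + 25 * (real n - 1) * real t) - 25 * real t * (\<Sum>k<n. real k)"
    by (simp add: sum_subtractf sum_distrib_left)
  also have "\<dots> = real n * (90 - 5 * real t) + 25 * real t * real n * (real n - 1) / 2"
    unfolding gauss_r by (simp add: algebra_simps)
  finally show ?thesis .
qed

lemma Pclosed:
  assumes t: "t \<in> {1,2,3}"
  shows "real (\<Sum>k<n. \<Sum>m<n. blk t k m) = (90 - 5 * real t) * real n * (real n - 1)
     + 25 * real t * real n * (real n - 1) * (real n - 2) / 3 + 36 * real n"
proof (induction n)
  case 0 then show ?case by simp
next
  case (Suc n)
  have "(\<Sum>k<Suc n. \<Sum>m<Suc n. blk t k m) = (\<Sum>k<n. \<Sum>m<n. blk t k m) + (\<Sum>k<n. blk t k n)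
     + (\<Sum>m<n. blk t n m) + blk t n n"
    by (simp add: sum.distrib)
  also have "(\<Sum>m<n. blk t n m) = (\<Sum>k<n. blk t k n)" by (simp add: blk_sym)
  finally have N: "(\<Sum>k<Suc n. \<Sum>m<Suc n. blk t k m) = (\<Sum>k<n. \<Sum>m<n. blk t k m)
     + 2 * (\<Sum>k<n. blk t k n) + 36" by (simp add: blk_eq)
  have R: "real (\<Sum>k<Suc n. \<Sum>m<Suc n. blk t k m) = real (\<Sum>k<n. \<Sum>m<n. blk t k m)
     + 2 * real (\<Sum>k<n. blk t k n) + 36" unfolding N by simp
  have X: "real (\<Sum>k<n. blk t k n) = real n * (90 - 5 * real t) + 25 * real t * real n * (real n - 1) / 2"
    using blk_col[OF t, of n] by simp
  have "real (\<Sum>k<Suc n. \<Sum>m<Suc n. blk t k m) = ((90 - 5 * real t) * real n * (real n - 1)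
     + 25 * real t * real n * (real n - 1) * (real n - 2) / 3 + 36 * real n)
     + 2 * (real n * (90 - 5 * real t) + 25 * real t * real n * (real n - 1) / 2) + 36"
    unfolding R X Suc.IH by (rule refl)
  then show ?case by (simp add: field_simps)
qed

lemma qb:
  assumes t: "t \<in> {1,2,3}"
  shows "real (\<Sum>b\<in>{1..5::nat}. fd t (0,0) (m,b)) = 5 * real m * real t + 9"
proof (cases "m = 0")
  case True then show ?thesis unfolding five by (simp add: fd_def hx_def)
next
  case False
  define d where "d = m - 1"
  have e: "\<And>b. fd t (0,0) (m,b) = hx 0 t + hx 0 b + d * t" using False by (simp add: fd_def d_def)
  have r: "real m = real d + 1" using False d_def by simp
  have "(\<Sum>b\<in>{1..5::nat}. fd t (0,0) (m,b)) = (\<Sum>b\<in>{1..5::nat}. hx 0 t + hx 0 b + d * t)"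
    unfolding e ..
  also have "\<dots> = 5 * t + 9 + 5 * d * t" using t unfolding five by (auto simp: hx_def)
  finally show ?thesis unfolding r by (simp add: algebra_simps)
qed

lemma Qclosed:
  assumes t: "t \<in> {1,2,3}"
  shows "real (\<Sum>m<n. \<Sum>b\<in>{1..5::nat}. fd t (0,0) (m,b)) = 5 * real t * real n * (real n - 1) / 2 + 9 * real n"
proof -
  have "real (\<Sum>m<n. \<Sum>b\<in>{1..5::nat}. fd t (0,0) (m,b)) = (\<Sum>m<n. 5 * real t * real m + 9)"
    unfolding of_nat_sum[of "\<lambda>m. \<Sum>b\<in>{1..5::nat}. fd t (0,0) (m,b)"] proof (rule sum.cong)
    fix m show "real (\<Sum>b\<in>{1..5::nat}. fd t (0,0) (m,b)) = 5 * real t * real m + 9"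
      using qb[OF t, of m] by (simp add: algebra_simps)
  qed simp
  also have "\<dots> = 5 * real t * (\<Sum>m<n. real m) + 9 * real n" by (simp add: sum.distrib sum_distrib_left)
  finally show ?thesis unfolding gauss_r by simp
qed

lemma sumB: "(\<Sum>v\<in>{..<n} \<times> {1..5::nat}. h v) = (\<Sum>m<n. \<Sum>b\<in>{1..5::nat}. h (m,b))"
  by (simp add: sum.cartesian_product)

lemma wiener_t:
  assumes t: "t \<in> {1,2,3}" and n: "1 \<le> n"
  shows "real (wiener (spiro_V t n) (spiro_E t n)) =
     ((90 - 5 * real t) * real n * (real n - 1) + 25 * real t * real n * (real n - 1) * (real n - 2) / 3 + 36 * real n) / 2
     + (5 * real t * real n * (real n - 1) / 2 + 9 * real n)"
proof -
  define V where "V = spiro_V t n"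
  define B where "B = {..<n} \<times> {1..5::nat}"
  have VB: "V = insert (0,0) B" unfolding V_def B_def using V_eq[OF t n] .
  have finB: "finite B" unfolding B_def by simp
  have nB: "(0,0) \<notin> B" unfolding B_def by simp
  have finV: "finite V" using VB finB by simp
  have W1: "wiener V (spiro_E t n) = (\<Sum>S\<in>{S. S \<subseteq> V \<and> card S = 2}. fd t (Min S) (Max S))"
    unfolding wiener_def
  proof (rule sum.cong)
    fix S assume "S \<in> {S. S \<subseteq> V \<and> card S = 2}"
    then have S: "S \<subseteq> V" "finite S" "S \<noteq> {}" by (auto simp: card_2_iff)
    have "Min S \<in> V" "Max S \<in> V" using S Min_in[OF S(2,3)] Max_in[OF S(2,3)] by blast+
    then show "gdist (spiro_E t n) (Min S) (Max S) = fd t (Min S) (Max S)"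
      using gdist_fd[OF t n] cn_V[OF t n] unfolding V_def by blast
  qed simp
  have W2: "2 * (\<Sum>S\<in>{S. S \<subseteq> V \<and> card S = 2}. fd t (Min S) (Max S)) = (\<Sum>u\<in>V. \<Sum>v\<in>V. fd t u v)"
    by (rule pair_sum[OF finV]) (auto simp: fd_sym)
  have W3: "(\<Sum>u\<in>V. \<Sum>v\<in>V. fd t u v) = (\<Sum>u\<in>B. \<Sum>v\<in>B. fd t u v) + 2 * (\<Sum>v\<in>B. fd t (0,0) v)"
    unfolding VB using finB nB by (simp add: sum.distrib fd_sym[of t _ "(0,0)"])
  have W4: "(\<Sum>u\<in>B. \<Sum>v\<in>B. fd t u v) = (\<Sum>k<n. \<Sum>m<n. blk t k m)"
    unfolding B_def sumB blk_def by (rule sum.cong[OF refl], rule sum.swap)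
  have W5: "(\<Sum>v\<in>B. fd t (0,0) v) = (\<Sum>m<n. \<Sum>b\<in>{1..5::nat}. fd t (0,0) (m,b))"
    unfolding B_def sumB ..
  have "2 * wiener V (spiro_E t n) = (\<Sum>k<n. \<Sum>m<n. blk t k m) + 2 * (\<Sum>m<n. \<Sum>b\<in>{1..5::nat}. fd t (0,0) (m,b))"
    using W1 W2 W3 W4 W5 by simp
  then have "2 * real (wiener V (spiro_E t n)) = real (\<Sum>k<n. \<Sum>m<n. blk t k m) + 2 * real (\<Sum>m<n. \<Sum>b\<in>{1..5::nat}. fd t (0,0) (m,b))"
    by (metis of_nat_add of_nat_mult of_nat_numeral)
  then show ?thesis unfolding V_def Pclosed[OF t] Qclosed[OF t] by (simp add: field_simps)
qed

theorem corollary2p3: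
  fixes n :: nat
  assumes "n \<ge> 1"
  shows "real (wiener (ortho_V n) (ortho_E n)) = 25/6 * real n ^ 3 + 65/2 * real n ^ 2 - 29/3 * real n \<and>
         real (wiener (meta_V n) (meta_E n)) = 25/3 * real n ^ 3 + 20 * real n ^ 2 - 4/3 * real n \<and>
         real (wiener (para_V n) (para_E n)) = 25/2 * real n ^ 3 + 15/2 * real n ^ 2 + 7 * real n"
  using wiener_t[of 1 n] wiener_t[of 2 n] wiener_t[of 3 n] assms
  by (simp add: field_simps power3_eq_cube power2_eq_square)

end
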